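(* Let $S$ be a minimal zero-sum sequence over $\mathbb{Z}$ with $|S|$ finite and $|S|>1$. Suppose $S=S^+\cdot S^-$ where \[S^+=\prod_{i=1}^n a_i^{[x_i]},\qquad S^-=\prod_{j=1}^m (-b_j)^{[y_j]},\] with positive integers $a_1\le \dots\le a_n$, $b_1\le\dots\le b_m$, and positive integers $x_i$ ($i\in[1,n]$), $y_j$ ($j\in[1,m]$). Then \[|S^+|\le \left\lfloor -S^-_{\rm av}\right\rfloor=\left\lfloor \frac{\sum_{j=1}^m b_j y_j}{\sum_{j=1}^m y_j}\right\rfloor \quad\text{and}\quad |S^-|\le \left\lfloor S^+_{\rm av}\right\rfloor=\left\lfloor \frac{\sum_{i=1}^n a_i x_i}{\sum_{i=1}^n x_i}\right\rfloor.\]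
   Context: A sequence over a subset $G_0$ of an abelian group is a finite unordered sequence (multiset) of elements of $G_0$; the product $R\cdot T$ denotes concatenation, and $R$, $T$ are then called subsequences of $R\cdot T$. For $g$ and an integer $d\ge 0$, $g^{[d]}$ denotes the sequence consisting of $d$ copies of $g$. For $S=s_1\cdot\ldots\cdot s_t$: $|S|=t$ is its length, $\sigma(S)=s_1+\dots+s_t$ its sum, and $S_{\rm av}=\sigma(S)/|S|$ its average. $S$ is a zero-sum sequence if $\sigma(S)=0$, and a minimal zero-sum sequence if it is a nontrivial zero-sum sequence containing no proper nontrivial zero-sum subsequence. $[x,y]=\{i\in\mathbb{Z}: x\le i\le y\}$. *)

theory Defs
  imports Complex_Main "HOL-Library.Multiset"
begin

text \<open>Sequences over a subset of an abelian group are modelled as finite multisets.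
  The sum of a sequence is sum_mset, its length is size.\<close>

definition zero_sum_seq :: "'a::comm_monoid_add multiset \<Rightarrow> bool" where
  "zero_sum_seq S \<longleftrightarrow> sum_mset S = 0"

definition minimal_zero_sum_seq :: "'a::comm_monoid_add multiset \<Rightarrow> bool" where
  "minimal_zero_sum_seq S \<longleftrightarrow>
     S \<noteq> {#} \<and> sum_mset S = 0 \<and>
     (\<forall>T. T \<subseteq># S \<and> T \<noteq> {#} \<and> sum_mset T = 0 \<longrightarrow> T = S)"

definition seq_av :: "int multiset \<Rightarrow> real" where
  "seq_av S = real_of_int (sum_mset S) / real (size S)"

end

theory Submission
  imports Defs
begin

lemma sum_mset_fsum: "finite I \<Longrightarrow> sum_mset (\<Sum>i\<in>I. M i) = (\<Sum>i\<in>I. sum_mset (M i))"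
  by (induction I rule: finite_induct) auto

lemma sum_mset_uminus: "sum_mset (image_mset uminus (M::int multiset)) = - sum_mset M"
  by (induction M) auto

lemma in_fsum: "finite I \<Longrightarrow> z \<in># (\<Sum>i\<in>I. M i) \<Longrightarrow> \<exists>i\<in>I. z \<in># M i"
  by (induction I rule: finite_induct) auto

lemma sub_size_eq: "(T::'a multiset) \<subseteq># S \<Longrightarrow> size T = size S \<Longrightarrow> T = S"
proof -
  assume a: "T \<subseteq># S" "size T = size S"
  have "S = T + (S - T)" using a(1) by (simp add: subset_mset.add_diff_inverse)
  then have "size S = size T + size (S - T)" by (metis size_union)
  then have "size (S - T) = 0" using a(2) by simp
  then show ?thesis using \<open>S = T + (S - T)\<close> by simp
qed

lemma sum_mset_pos: "\<forall>x\<in>#M. (x::int) > 0 \<Longrightarrow> M \<noteq> {#} \<Longrightarrow> sum_mset M > 0"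
proof (induction M)
  case empty then show ?case by simp
next
  case (add x M)
  then show ?case by (cases "M = {#}") (auto simp: add_pos_pos)
qed

lemma sum_mset_nonneg': "\<forall>x\<in>#M. (x::int) > 0 \<Longrightarrow> sum_mset M \<ge> 0"
  using sum_mset_pos by fastforce

lemma block:
  fixes xs :: "int list"
  assumes pos: "\<forall>x\<in>set xs. x > 0" and i: "i < length xs" and i': "i' < length xs"
  shows "\<exists>T. T \<subseteq># mset xs \<and> T \<noteq> mset xs
    \<and> sum_mset T = (sum_list (take i xs) - sum_list (take i' xs)) mod sum_list xs
    \<and> (T = {#} \<longrightarrow> i = i')"
proof (cases "i' \<le> i")
  case True
  define T where "T = mset (drop i' (take i xs))"
  have e1: "take i xs = take i' xs @ drop i' (take i xs)" using True
    by (metis append_take_drop_id min.absorb1 take_take)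
  have e2: "xs = take i xs @ drop i xs" by simp
  have s1: "sum_list (take i xs) = sum_list (take i' xs) + sum_mset T"
    unfolding T_def by (subst e1) (simp add: sum_mset_sum_list)
  have s2: "sum_list xs = sum_list (take i xs) + sum_list (drop i xs)"
    by (metis append_take_drop_id sum_list_append)
  have dne: "drop i xs \<noteq> []" using i by simp
  have "\<forall>x\<in>set (drop i xs). x > 0" using pos by (meson in_set_dropD)
  then have "sum_mset (mset (drop i xs)) > 0" using dne sum_mset_pos by auto
  then have p1: "sum_list (drop i xs) > 0" by (simp add: sum_mset_sum_list)
  have "\<forall>x\<in>#T. x > 0" unfolding T_def using pos
    by (metis in_set_dropD in_set_takeD set_mset_mset)
  then have p2: "sum_mset T \<ge> 0" by (rule sum_mset_nonneg')
  have "\<forall>x\<in>#mset (take i' xs). x > 0" using pos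
    by (metis in_set_takeD set_mset_mset)
  then have p3: "sum_list (take i' xs) \<ge> 0" by (metis sum_mset_nonneg' sum_mset_sum_list)
  have md: "sum_mset T mod sum_list xs = sum_mset T" using p1 p2 p3 s1 s2
    by (intro mod_pos_pos_trivial) auto
  have sub: "T \<subseteq># mset xs"
  proof -
    have "mset xs = mset (take i' xs) + T + mset (drop i xs)"
      unfolding T_def by (subst e2, subst e1) simp
    then show ?thesis by (metis mset_subset_eq_add_left mset_subset_eq_add_right subset_mset.dual_order.trans)
  qed
  have ne: "T \<noteq> mset xs"
  proof
    assume "T = mset xs"
    then have "size T = length xs" by simp
    moreover have "size T = i - i'" unfolding T_def using i by simp
    ultimately show False using i by simp
  qed
  have em: "T = {#} \<longrightarrow> i = i'" unfolding T_def using True i by auto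
  show ?thesis using sub ne md s1 em by (intro exI[of _ T]) auto
next
  case False
  define T where "T = mset (take i xs @ drop i' xs)"
  define U where "U = mset (drop i (take i' xs))"
  have e1: "take i' xs = take i xs @ drop i (take i' xs)" using False
    by (metis append_take_drop_id min.absorb1 nat_le_linear take_take)
  have e2: "xs = take i' xs @ drop i' xs" by simp
  have s1: "sum_list (take i' xs) = sum_list (take i xs) + sum_mset U"
    unfolding U_def by (subst e1) (simp add: sum_mset_sum_list)
  have s2: "sum_list xs = sum_list (take i' xs) + sum_list (drop i' xs)"
    by (metis append_take_drop_id sum_list_append)
  have sT: "sum_mset T = sum_list (take i xs) + sum_list (drop i' xs)"
    unfolding T_def by (simp add: sum_mset_sum_list)
  have une: "U \<noteq> {#}" unfolding U_def using False i' by simp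
  have "\<forall>x\<in>#U. x > 0" unfolding U_def using pos
    by (metis in_set_dropD in_set_takeD set_mset_mset)
  then have pU: "sum_mset U > 0" using une sum_mset_pos by auto
  have "\<forall>x\<in>#mset (take i xs). x > 0" using pos
    by (metis in_set_takeD set_mset_mset)
  then have pa: "sum_list (take i xs) \<ge> 0" by (metis sum_mset_nonneg' sum_mset_sum_list)
  have "\<forall>x\<in>#mset (drop i' xs). x > 0" using pos
    by (metis in_set_dropD set_mset_mset)
  then have pb: "sum_list (drop i' xs) \<ge> 0" by (metis sum_mset_nonneg' sum_mset_sum_list)
  have "sum_list (take i xs) - sum_list (take i' xs) = sum_mset T - sum_list xs"
    using s1 s2 sT by simp
  then have "(sum_list (take i xs) - sum_list (take i' xs)) mod sum_list xs = sum_mset T mod sum_list xs"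
    by (simp add: mod_diff_right_eq[symmetric])
  also have "\<dots> = sum_mset T" using pU pa pb s1 s2 sT by (intro mod_pos_pos_trivial) auto
  finally have md: "(sum_list (take i xs) - sum_list (take i' xs)) mod sum_list xs = sum_mset T" .
  have mx: "mset xs = T + U"
    unfolding T_def U_def by (subst e2, subst e1) simp
  have sub: "T \<subseteq># mset xs" using mx by simp
  have ne: "T \<noteq> mset xs" using mx une by simp
  have em: "T \<noteq> {#}" unfolding T_def using i' by simp
  show ?thesis using sub ne md em by (intro exI[of _ T]) auto
qed

lemma key:
  fixes Sp Sm :: "int multiset"
  assumes minimal: "minimal_zero_sum_seq (Sp + Sm)"
    and pp: "\<forall>x\<in>#Sp. x > 0" and nn: "\<forall>x\<in>#Sm. x < 0"
  shows "size Sp * size Sm \<le> sum_mset Sp \<and> sum_mset Sp > 0"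
proof -
  define N where "N = image_mset uminus Sm"
  have NN: "image_mset uminus N = Sm" unfolding N_def by (simp add: multiset.map_comp comp_def)
  have npos: "\<forall>x\<in>#N. x > 0" unfolding N_def using nn by auto
  have z: "sum_mset Sp + sum_mset Sm = 0" using minimal unfolding minimal_zero_sum_seq_def by simp
  have sN: "sum_mset N = - sum_mset Sm" unfolding N_def by (simp add: sum_mset_uminus)
  then have sPN: "sum_mset Sp = sum_mset N" using z by simp
  have ne: "Sp + Sm \<noteq> {#}" using minimal unfolding minimal_zero_sum_seq_def by simp
  have spne: "Sp \<noteq> {#}"
  proof
    assume "Sp = {#}"
    then have "N \<noteq> {#}" using ne unfolding N_def by simp
    then have "sum_mset N > 0" using npos sum_mset_pos by auto
    then show False using sPN \<open>Sp = {#}\<close> by simp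
  qed
  have spos: "sum_mset Sp > 0" using spne pp sum_mset_pos by auto
  obtain as where as: "mset as = Sp" using ex_mset by blast
  obtain bs where bs: "mset bs = N" using ex_mset by blast
  define \<sigma> where "\<sigma> = sum_mset Sp"
  have sa: "sum_list as = \<sigma>" unfolding \<sigma>_def using as by (metis sum_mset_sum_list)
  have sb: "sum_list bs = \<sigma>" unfolding \<sigma>_def using bs sPN by (metis sum_mset_sum_list)
  have apos: "\<forall>x\<in>set as. x > 0" using pp as by auto
  have bpos: "\<forall>x\<in>set bs. x > 0" using npos bs by auto
  define p where "p = length as"
  define q where "q = length bs"
  have pS: "size Sp = p" unfolding p_def using as by auto
  have qS: "size Sm = q" unfolding q_def using bs NN by (metis size_image_mset size_mset)
  define f where "f = (\<lambda>(i,j). (sum_list (take i as) - sum_list (take j bs)) mod \<sigma>)"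
  have inj: "inj_on f ({..<p} \<times> {..<q})"
  proof (rule inj_onI)
    fix u v
    assume uv: "u \<in> {..<p} \<times> {..<q}" "v \<in> {..<p} \<times> {..<q}" and fuv: "f u = f v"
    obtain i j where u: "u = (i, j)" by (cases u)
    obtain i' j' where v: "v = (i', j')" by (cases v)
    have ij: "i \<in> {..<p}" "j \<in> {..<q}" "i' \<in> {..<p}" "j' \<in> {..<q}" using uv u v by auto
    have feq: "f (i, j) = f (i', j')" using fuv u v by simp
    have "(sum_list (take i as) - sum_list (take i' as)) mod \<sigma>
        = (sum_list (take j bs) - sum_list (take j' bs)) mod \<sigma>"
      using feq unfolding f_def by (simp add: mod_eq_dvd_iff algebra_simps)
    obtain T1 where T1: "T1 \<subseteq># mset as" "T1 \<noteq> mset as"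
      "sum_mset T1 = (sum_list (take i as) - sum_list (take i' as)) mod sum_list as"
      "T1 = {#} \<longrightarrow> i = i'"
      using block[OF apos, of i i'] ij p_def by auto
    obtain T2 where T2: "T2 \<subseteq># mset bs" "T2 \<noteq> mset bs"
      "sum_mset T2 = (sum_list (take j bs) - sum_list (take j' bs)) mod sum_list bs"
      "T2 = {#} \<longrightarrow> j = j'"
      using block[OF bpos, of j j'] ij q_def by auto
    have s12: "sum_mset T1 = sum_mset T2" using T1(3) T2(3) sa sb
      \<open>(sum_list (take i as) - sum_list (take i' as)) mod \<sigma> = _\<close> by simp
    define T where "T = T1 + image_mset uminus T2"
    have "image_mset uminus T2 \<subseteq># Sm" using T2(1) bs NN by (metis image_mset_subseteq_mono)
    then have Tsub: "T \<subseteq># Sp + Sm" unfolding T_def using T1(1) as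
      by (simp add: subset_mset.add_mono)
    have Tz: "sum_mset T = 0" unfolding T_def using s12 by (simp add: sum_mset_uminus)
    have "T = {#}"
    proof (rule ccontr)
      assume "T \<noteq> {#}"
      then have "T = Sp + Sm" using minimal Tsub Tz unfolding minimal_zero_sum_seq_def by blast
      then have "size (T1 + image_mset uminus T2) = size (Sp + Sm)" unfolding T_def by simp
      then have "size T1 + size T2 = p + q" using pS qS by simp
      moreover have "size T1 \<le> p" using T1(1) p_def by (metis size_mset size_mset_mono)
      moreover have "size T2 \<le> q" using T2(1) q_def by (metis size_mset size_mset_mono)
      ultimately have "size T1 = size (mset as)" using p_def by simp
      then show False using sub_size_eq T1(1) T1(2) by blast
    qed
    then show "u = v" using T1(4) T2(4) u v unfolding T_def by simp
  qed
  have img: "f ` ({..<p} \<times> {..<q}) \<subseteq> {0..<\<sigma>}"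
    using spos unfolding f_def \<sigma>_def by auto
  have "card ({..<p} \<times> {..<q}) \<le> card {0..<\<sigma>}"
    by (rule card_inj_on_le[OF inj img]) simp
  then have "p * q \<le> nat \<sigma>" by (simp add: card_cartesian_product)
  then have "int (p * q) \<le> \<sigma>" using spos \<sigma>_def by linarith
  then show ?thesis using pS qS spos \<sigma>_def by simp
qed

theorem theorem1p3:
  fixes S Sp Sm :: "int multiset"
    and n m :: nat and a b :: "nat \<Rightarrow> int" and x y :: "nat \<Rightarrow> nat"
  assumes minimal: "minimal_zero_sum_seq S"
    and len: "size S > 1"
    and Sp_def: "Sp = (\<Sum>i\<in>{1..n}. replicate_mset (x i) (a i))"
    and Sm_def: "Sm = (\<Sum>j\<in>{1..m}. replicate_mset (y j) (- b j))"
    and decomp: "S = Sp + Sm"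
    and a_pos: "\<forall>i\<in>{1..n}. a i > 0"
    and a_mono: "\<forall>i\<in>{1..n}. \<forall>i'\<in>{1..n}. i \<le> i' \<longrightarrow> a i \<le> a i'"
    and b_pos: "\<forall>j\<in>{1..m}. b j > 0"
    and b_mono: "\<forall>j\<in>{1..m}. \<forall>j'\<in>{1..m}. j \<le> j' \<longrightarrow> b j \<le> b j'"
    and x_pos: "\<forall>i\<in>{1..n}. x i > 0"
    and y_pos: "\<forall>j\<in>{1..m}. y j > 0"
  shows "int (size Sp) \<le> \<lfloor>- seq_av Sm\<rfloor>
         \<and> \<lfloor>- seq_av Sm\<rfloor> = \<lfloor>real_of_int (\<Sum>j\<in>{1..m}. b j * int (y j)) / real (\<Sum>j\<in>{1..m}. y j)\<rfloor>
         \<and> int (size Sm) \<le> \<lfloor>seq_av Sp\<rfloor>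
         \<and> \<lfloor>seq_av Sp\<rfloor> = \<lfloor>real_of_int (\<Sum>i\<in>{1..n}. a i * int (x i)) / real (\<Sum>i\<in>{1..n}. x i)\<rfloor>"
proof -
  have pp: "\<forall>z\<in>#Sp. z > 0" unfolding Sp_def
  proof
    fix z assume "z \<in># (\<Sum>i\<in>{1..n}. replicate_mset (x i) (a i))"
    then have "\<exists>i\<in>{1..n}. z \<in># replicate_mset (x i) (a i)" by (intro in_fsum) auto
    then obtain i where "i \<in> {1..n}" "z \<in># replicate_mset (x i) (a i)" by blast
    then show "z > 0" using a_pos by (auto split: if_splits)
  qed
  have nn: "\<forall>z\<in>#Sm. z < 0" unfolding Sm_def
  proof
    fix z assume "z \<in># (\<Sum>i\<in>{1..m}. replicate_mset (y i) (- b i))"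
    then have "\<exists>i\<in>{1..m}. z \<in># replicate_mset (y i) (- b i)" by (intro in_fsum) auto
    then obtain i where "i \<in> {1..m}" "z \<in># replicate_mset (y i) (- b i)" by blast
    then show "z < 0" using b_pos by (auto split: if_splits)
  qed
  have K: "size Sp * size Sm \<le> sum_mset Sp" "sum_mset Sp > 0"
    using key[OF minimal[unfolded decomp] pp nn] by auto
  have z: "sum_mset Sp + sum_mset Sm = 0" using minimal decomp unfolding minimal_zero_sum_seq_def by simp
  have spS: "sum_mset Sp = (\<Sum>i\<in>{1..n}. a i * int (x i))" unfolding Sp_def
    by (simp add: sum_mset_fsum mult.commute)
  have szp: "size Sp = (\<Sum>i\<in>{1..n}. x i)" unfolding Sp_def by (simp add: size_multiset_sum)
  have smS: "sum_mset Sm = - (\<Sum>j\<in>{1..m}. b j * int (y j))" unfolding Sm_def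
    by (simp add: sum_mset_fsum mult.commute sum_negf)
  have szm: "size Sm = (\<Sum>j\<in>{1..m}. y j)" unfolding Sm_def by (simp add: size_multiset_sum)
  have "Sp \<noteq> {#}" using K(2) by auto
  then have ppos: "size Sp > 0" by (simp add: nonempty_has_size)
  have "Sm \<noteq> {#}" using K(2) z by auto
  then have mpos: "size Sm > 0" by (simp add: nonempty_has_size)
  define \<sigma> where "\<sigma> = sum_mset Sp"
  have avm: "- seq_av Sm = real_of_int \<sigma> / real (size Sm)"
  proof -
    have "sum_mset Sm = - \<sigma>" using z unfolding \<sigma>_def by linarith
    then show ?thesis unfolding seq_av_def by simp
  qed
  have avp: "seq_av Sp = real_of_int \<sigma> / real (size Sp)" unfolding seq_av_def \<sigma>_def by simp
  have r: "real (size Sp) * real (size Sm) \<le> real_of_int \<sigma>"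
    proof -
    have "real_of_int (int (size Sp * size Sm)) \<le> real_of_int \<sigma>" using K(1) unfolding \<sigma>_def by (simp only: of_int_le_iff)
    then show ?thesis by simp
  qed
  have 1: "real (size Sp) \<le> real_of_int \<sigma> / real (size Sm)" using r mpos by (simp add: field_simps)
  have 2: "real (size Sm) \<le> real_of_int \<sigma> / real (size Sp)" using r ppos by (simp add: field_simps)
  have f1: "int (size Sp) \<le> \<lfloor>- seq_av Sm\<rfloor>" unfolding avm using 1 by (simp add: le_floor_iff)
  have f2: "int (size Sm) \<le> \<lfloor>seq_av Sp\<rfloor>" unfolding avp using 2 by (simp add: le_floor_iff)
  have e1: "- seq_av Sm = real_of_int (\<Sum>j\<in>{1..m}. b j * int (y j)) / real (\<Sum>j\<in>{1..m}. y j)"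
    unfolding seq_av_def using smS szm by simp
  have e2: "seq_av Sp = real_of_int (\<Sum>i\<in>{1..n}. a i * int (x i)) / real (\<Sum>i\<in>{1..n}. x i)"
    unfolding seq_av_def using spS szp by simp
  show ?thesis using f1 f2 e1 e2 by simp
qed

end
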